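(* For each $n\ge1$ there is a bijection $\varphi'$ from the set of plane trees with $n$ edges to $\mathfrak S_n(321)$ such that, for every such tree $T$ and $\pi=\varphi'(T)$: (1) the number of young leaves of $T$ equals the number of indices $i\in\{1,\dots,n-1\}$ such that both $\pi_i$ and $\pi_{i+1}$ are deficiencies of $\pi$, plus $1$ if $\pi_n<n$; (2) the number of old leaves of $T$ equals the number of weak excedances $\pi_i$ of $\pi$ that are not followed by another weak excedance (i.e. $i=n$, or $\pi_{i+1}$ is not a weak excedance).
   Context: A plane tree is a rooted tree in which the children of each vertex are linearly ordered. A leaf is a vertex with no children; the one-vertex tree has no leaves. A leaf is old if it is the leftmost child of its parent, young otherwise. $\mathfrak S_n(321)$ is the set of permutations $\pi=\pi_1\cdots\pi_n$ of $\{1,\dots,n\}$ having no indices $a<b<c$ with $\pi_a>\pi_b>\pi_c$. An entry $\pi_i$ is a weak excedance if $\pi_i\ge i$ and a deficiency if $\pi_i<i$. *)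

theory Defs
  imports "HOL-Combinatorics.Permutations"
begin

datatype ptree = Node "ptree list"

fun edges :: "ptree \<Rightarrow> nat" where
  "edges (Node ts) = (\<Sum>t\<leftarrow>ts. Suc (edges t))"

text \<open>A leaf is a vertex with no children that has a parent (so the one-vertex
  tree has no leaves). It is old if it is the leftmost child of its parent,
  young otherwise.\<close>
fun old_leaves :: "ptree \<Rightarrow> nat" where
  "old_leaves (Node ts) =
     (case ts of [] \<Rightarrow> 0 | t # _ \<Rightarrow> (if t = Node [] then 1 else 0))
     + (\<Sum>t\<leftarrow>ts. old_leaves t)"

fun young_leaves :: "ptree \<Rightarrow> nat" where
  "young_leaves (Node ts) =
     length (filter (\<lambda>t. t = Node []) (drop 1 ts))
     + (\<Sum>t\<leftarrow>ts. young_leaves t)"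

definition plane_trees :: "nat \<Rightarrow> ptree set" where
  "plane_trees n = {T. edges T = n}"

text \<open>Permutations of {1..n} as functions nat => nat (identity outside).\<close>
definition avoids321 :: "nat \<Rightarrow> (nat \<Rightarrow> nat) \<Rightarrow> bool" where
  "avoids321 n \<pi> \<longleftrightarrow>
     \<not> (\<exists>a b c. 1 \<le> a \<and> a < b \<and> b < c \<and> c \<le> n \<and> \<pi> a > \<pi> b \<and> \<pi> b > \<pi> c)"

definition S321 :: "nat \<Rightarrow> (nat \<Rightarrow> nat) set" where
  "S321 n = {\<pi>. \<pi> permutes {1..n} \<and> avoids321 n \<pi>}"

definition weak_exc :: "(nat \<Rightarrow> nat) \<Rightarrow> nat \<Rightarrow> bool" where
  "weak_exc \<pi> i \<longleftrightarrow> \<pi> i \<ge> i"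

definition deficiency :: "(nat \<Rightarrow> nat) \<Rightarrow> nat \<Rightarrow> bool" where
  "deficiency \<pi> i \<longleftrightarrow> \<pi> i < i"

end

theory Submission
  imports Defs
begin

fun nf :: "bool list \<Rightarrow> bool list" where
  "nf [] = []" | "nf (x # xs) = True # xs"

fun fl :: "ptree \<Rightarrow> bool list" where
  "fl (Node []) = []"
| "fl (Node (t # ts)) = False # fl t @ nf (fl (Node ts))"

definition shp :: "nat \<Rightarrow> nat \<Rightarrow> (nat \<times> nat) set \<Rightarrow> (nat \<times> nat) set" where
  "shp x y S = (\<lambda>(a,b). (a+x, b+y)) ` S"

fun val :: "ptree \<Rightarrow> (nat \<times> nat) set" where
  "val (Node []) = {}"
| "val (Node (t # ts)) = shp 1 0 (val t) \<union>
     (if ts = [] then {} else insert (Suc (Suc (edges t)), Suc (edges t)) (shp (Suc (edges t)) (Suc (edges t)) (val (Node ts))))"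

lemma edges_cons: "edges (Node (t # ts)) = Suc (edges t) + edges (Node ts)"
  by simp

fun yc :: "bool list \<Rightarrow> nat" where
  "yc [] = 0"
| "yc [x] = (if x then 1 else 0)"
| "yc (x # y # r) = (if x \<and> y then 1 else 0) + yc (y # r)"

fun oc :: "bool list \<Rightarrow> nat" where
  "oc [] = 0"
| "oc [x] = (if x then 0 else 1)"
| "oc (x # y # r) = (if \<not> x \<and> y then 1 else 0) + oc (y # r)"

lemma yc_app: "yc (xs @ True # r) = yc xs + yc (True # r)"
  by (induction xs rule: yc.induct) auto

lemma oc_app: "oc (xs @ True # r) = oc xs + oc (True # r)"
  by (induction xs rule: oc.induct) auto

lemma yc_app_nf: "yc (xs @ nf zs) = yc xs + yc (nf zs)"
  by (cases zs) (auto simp: yc_app)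

lemma oc_app_nf: "oc (xs @ nf zs) = oc xs + oc (nf zs)"
  by (cases zs) (auto simp: oc_app)

lemma yc_TF: "yc (True # r) = yc (False # r) + (if r = [] \<or> hd r then 1 else 0)"
  by (cases r) auto

lemma oc_TF: "oc (False # r) = oc (True # r) + (if r = [] \<or> hd r then 1 else 0)"
  by (cases r) auto

lemma length_nf[simp]: "length (nf xs) = length xs"
  by (cases xs) auto

lemma fl_len: "length (fl T) = edges T"
  by (induction T rule: fl.induct) auto
 

lemma nf_Nil[simp]: "nf xs = [] \<longleftrightarrow> xs = []"
  by (cases xs) auto

lemma fl_Nil: "fl T = [] \<longleftrightarrow> T = Node []"
  by (cases T rule: fl.cases) auto

lemma fl_hd: "fl T = x # r \<Longrightarrow> x = False"
  by (cases T rule: fl.cases) auto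

lemma young_cons: "young_leaves (Node (t # ts)) = young_leaves t + young_leaves (Node ts)
   + (case ts of [] \<Rightarrow> 0 | s # _ \<Rightarrow> (if s = Node [] then 1 else 0))"
  by (cases ts) auto

lemma old_cons: "old_leaves (Node (t # ts)) + (case ts of [] \<Rightarrow> 0 | s # _ \<Rightarrow> (if s = Node [] then 1 else 0))
   = (if t = Node [] then 1 else 0) + old_leaves t + old_leaves (Node ts)"
  by (cases ts) auto

lemma yc_False_fl: "yc (False # fl t) = yc (fl t)"
  by (cases "fl t") (auto dest: fl_hd)

lemma oc_False_fl: "oc (False # fl t) = (if t = Node [] then 1 else oc (fl t))"
  by (cases "fl t") (auto dest: fl_hd simp: fl_Nil)

lemma hd_r: "(fl s @ nf zs = [] \<or> hd (fl s @ nf zs)) \<longleftrightarrow> s = Node []"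
  by (cases "fl s"; cases zs) (auto dest: fl_hd simp: fl_Nil)

lemma young_fl: "young_leaves T = yc (fl T) \<and> old_leaves T = oc (fl T)"
proof (induction T rule: fl.induct)
  case 1
  then show ?case by simp
next
  case (2 t ts)
  show ?case
  proof (cases ts)
    case Nil
    then show ?thesis using 2 by (simp add: yc_False_fl oc_False_fl)
  next
    case (Cons s ts')
    have e: "fl (Node ts) = False # (fl s @ nf (fl (Node ts')))" using Cons by simp
    have y: "young_leaves (Node (t # ts)) = young_leaves t + young_leaves (Node ts) + (if s = Node [] then 1 else 0)"
      using young_cons[of t ts] Cons by simp
    have o: "old_leaves (Node (t # ts)) + (if s = Node [] then 1 else 0) = (if t = Node [] then 1 else 0) + old_leaves t + old_leaves (Node ts)"
      using old_cons[of t ts] Cons by simp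
    have "yc (fl (Node (t # ts))) = yc (fl t) + yc (True # (fl s @ nf (fl (Node ts'))))"
      using e yc_app[of "False # fl t"] by (simp add: yc_False_fl)
    also have "\<dots> = yc (fl t) + yc (fl (Node ts)) + (if s = Node [] then 1 else 0)"
      using e hd_r[of s "fl (Node ts')"] by (simp add: yc_TF)
    finally have Y: "yc (fl (Node (t # ts))) = yc (fl t) + yc (fl (Node ts)) + (if s = Node [] then 1 else 0)" .
    have "oc (fl (Node (t # ts))) = oc (False # fl t) + oc (True # (fl s @ nf (fl (Node ts'))))"
      using e oc_app[of "False # fl t"] by simp
    moreover have "oc (fl (Node ts)) = oc (True # (fl s @ nf (fl (Node ts')))) + (if s = Node [] then 1 else 0)"
      using e hd_r[of s "fl (Node ts')"] by (simp add: oc_TF)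
    ultimately have O: "oc (fl (Node (t # ts))) + (if s = Node [] then 1 else 0) = oc (False # fl t) + oc (fl (Node ts))"
      by simp
    have i1: "young_leaves t = yc (fl t)" "old_leaves t = oc (fl t)" using 2 by auto
    have i2: "young_leaves (Node ts) = yc (fl (Node ts))" "old_leaves (Node ts) = oc (fl (Node ts))" using 2 by auto
    have f: "fl (Node (t # ts)) = False # fl t @ nf (fl (Node ts))" by simp
    have O': "oc (fl (Node (t # ts))) + (if s = Node [] then 1 else 0) = (if t = Node [] then 1 else 0) + oc (fl t) + oc (fl (Node ts))"
      using O oc_False_fl[of t] by (cases "t = Node []") (auto simp: fl_Nil)
    show ?thesis using i1 i2 y o Y O' by linarith
  qed
qed

definition valid :: "nat \<Rightarrow> (nat \<times> nat) set \<Rightarrow> bool" where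
  "valid n S \<longleftrightarrow> (\<forall>p\<in>S. 1 \<le> snd p \<and> snd p < fst p \<and> fst p \<le> n) \<and>
     (\<forall>p\<in>S. \<forall>q\<in>S. fst p < fst q \<longleftrightarrow> snd p < snd q)"

lemma shp_mem: "p \<in> shp x y S \<longleftrightarrow> (\<exists>a b. (a,b) \<in> S \<and> p = (a+x, b+y))"
  unfolding shp_def by auto

lemma shp_mem2: "(c,d) \<in> shp x y S \<longleftrightarrow> x \<le> c \<and> y \<le> d \<and> (c-x, d-y) \<in> S"
  unfolding shp_def by force

lemma shp_inj: "shp x y A = shp x y B \<Longrightarrow> A = B"
proof -
  assume h: "shp x y A = shp x y B"
  have "inj (\<lambda>(a::nat,b::nat). (a+x, b+y))" by (auto simp: inj_def)
  then show "A = B" using h unfolding shp_def by (simp add: inj_image_eq_iff)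
qed

lemma val_cons_nil: "val (Node [t]) = shp 1 0 (val t)" by simp

lemma val_valid: "valid (edges T) (val T)"
proof (induction T rule: fl.induct)
  case 1
  then show ?case by (simp add: valid_def)
next
  case (2 t ts)
  let ?k = "Suc (edges t)"
  let ?m = "edges (Node ts)"
  have et: "edges (Node (t # ts)) = ?k + ?m" by simp
  have vt: "valid (edges t) (val t)" and vs: "valid ?m (val (Node ts))" using 2 by auto
  define A where "A = shp 1 0 (val t)"
  define B where "B = (if ts = [] then {} else insert (Suc ?k, ?k) (shp ?k ?k (val (Node ts))))"
  have V: "val (Node (t # ts)) = A \<union> B" unfolding A_def B_def by simp
  have A1: "\<forall>p\<in>A. 1 \<le> snd p \<and> snd p + 2 \<le> fst p \<and> fst p \<le> ?k"
  proof
    fix p assume "p \<in> A"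
    then obtain a b where ab: "(a,b) \<in> val t" "p = (a+1,b)" unfolding A_def shp_mem by auto
    then show "1 \<le> snd p \<and> snd p + 2 \<le> fst p \<and> fst p \<le> ?k" using vt unfolding valid_def by fastforce
  qed
  have A2: "\<forall>p\<in>A. \<forall>q\<in>A. fst p < fst q \<longleftrightarrow> snd p < snd q"
  proof (intro ballI)
    fix p q assume "p \<in> A" "q \<in> A"
    then obtain a b c d where "(a,b) \<in> val t" "p = (a+1,b)" "(c,d) \<in> val t" "q = (c+1,d)"
      unfolding A_def shp_mem by auto
    then show "fst p < fst q \<longleftrightarrow> snd p < snd q" using vt unfolding valid_def by fastforce
  qed
  have m1: "ts \<noteq> [] \<Longrightarrow> 1 \<le> ?m" by (cases ts) auto
  have Bm: "p \<in> B \<Longrightarrow> ts \<noteq> [] \<and> (p = (Suc ?k, ?k) \<or> (\<exists>a b. (a,b) \<in> val (Node ts) \<and> p = (a + ?k, b + ?k)))" for p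
    unfolding B_def by (auto simp: shp_mem split: if_splits)
  have B1: "\<forall>p\<in>B. ?k \<le> snd p \<and> snd p < fst p \<and> fst p \<le> ?k + ?m"
  proof
    fix p assume "p \<in> B"
    from Bm[OF this] m1 show "?k \<le> snd p \<and> snd p < fst p \<and> fst p \<le> ?k + ?m"
      using vs unfolding valid_def by fastforce
  qed
  have B2: "\<forall>p\<in>B. \<forall>q\<in>B. fst p < fst q \<longleftrightarrow> snd p < snd q"
  proof (intro ballI)
    fix p q assume "p \<in> B" "q \<in> B"
    from Bm[OF this(1)] Bm[OF this(2)] show "fst p < fst q \<longleftrightarrow> snd p < snd q"
      using vs unfolding valid_def by fastforce
  qed
  have B3: "\<forall>p\<in>B. Suc ?k \<le> fst p"
  proof
    fix p assume "p \<in> B"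
    from Bm[OF this] show "Suc ?k \<le> fst p"
      using vs unfolding valid_def by fastforce
  qed
  have C1: "\<forall>p\<in>A\<union>B. 1 \<le> snd p \<and> snd p < fst p \<and> fst p \<le> ?k + ?m" using A1 B1 by fastforce
  have C2: "\<forall>p\<in>A\<union>B. \<forall>q\<in>A\<union>B. fst p < fst q \<longleftrightarrow> snd p < snd q"
  proof (intro ballI)
    fix p q assume "p \<in> A \<union> B" "q \<in> A \<union> B"
    then consider "p \<in> A" "q \<in> A" | "p \<in> A" "q \<in> B" | "p \<in> B" "q \<in> A" | "p \<in> B" "q \<in> B" by blast
    then show "fst p < fst q \<longleftrightarrow> snd p < snd q"
    proof cases
      case 1 then show ?thesis using A2 by blast
    next
      case 2 then have "fst p \<le> ?k" "snd p + 2 \<le> fst p" "?k \<le> snd q" "Suc ?k \<le> fst q" using A1 B1 B3 by auto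
      then show ?thesis by linarith
    next
      case 3 then have "fst q \<le> ?k" "snd q + 2 \<le> fst q" "?k \<le> snd p" "Suc ?k \<le> fst p" using A1 B1 B3 by auto
      then show ?thesis by linarith
    next
      case 4 then show ?thesis using B2 by blast
    qed
  qed
  show ?case unfolding V et valid_def using C1 C2 by blast
qed

lemma edges_Node_pos: "edges (Node (t # ts)) \<ge> 1" by simp

lemma valid_val_t: "p \<in> val T \<Longrightarrow> 1 \<le> snd p \<and> snd p < fst p \<and> fst p \<le> edges T"
  using val_valid[of T] unfolding valid_def by blast

lemma valid_val_pair: "(a,b) \<in> val T \<Longrightarrow> 1 \<le> b \<and> b < a \<and> a \<le> edges T"
  using valid_val_t by fastforce

lemma dec_nil: "\<forall>p\<in>val (Node [t]). snd p + 2 \<le> fst p"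
  by (auto simp: shp_mem dest!: valid_val_pair)

lemma dec_cons:
  fixes t :: ptree and ts
  assumes "ts \<noteq> []"
  defines "k \<equiv> Suc (edges t)"
  shows "(Suc k, k) \<in> val (Node (t # ts))"
    and "\<forall>p\<in>val (Node (t # ts)). Suc (snd p) = fst p \<longrightarrow> Suc k \<le> fst p"
    and "{p\<in>val (Node (t # ts)). fst p \<le> k} = shp 1 0 (val t)"
    and "{p\<in>val (Node (t # ts)). Suc k < fst p} = shp k k (val (Node ts))"
proof -
  have V: "val (Node (t # ts)) = shp 1 0 (val t) \<union> insert (Suc k, k) (shp k k (val (Node ts)))"
    using assms by simp
  have A: "p \<in> shp 1 0 (val t) \<Longrightarrow> snd p + 2 \<le> fst p \<and> fst p \<le> k" for p
    unfolding k_def by (auto simp: shp_mem dest!: valid_val_pair)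
  have B: "p \<in> shp k k (val (Node ts)) \<Longrightarrow> Suc (Suc k) \<le> fst p" for p
    by (auto simp: shp_mem dest!: valid_val_pair)
  show "(Suc k, k) \<in> val (Node (t # ts))" using V by blast
  show "\<forall>p\<in>val (Node (t # ts)). Suc (snd p) = fst p \<longrightarrow> Suc k \<le> fst p"
    unfolding V using A B by fastforce
  show "{p\<in>val (Node (t # ts)). fst p \<le> k} = shp 1 0 (val t)"
    unfolding V using A B by fastforce
  show "{p\<in>val (Node (t # ts)). Suc k < fst p} = shp k k (val (Node ts))"
    unfolding V using A B by fastforce
qed

lemma val_inj: "edges T = n \<Longrightarrow> edges T' = n \<Longrightarrow> val T = val T' \<Longrightarrow> T = T'"
proof (induction n arbitrary: T T' rule: less_induct)
  case (less n)
  show ?case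
  proof (cases T)
    case (Node xs)
    show ?thesis
    proof (cases xs)
      case Nil
      then have "n = 0" using less.prems Node by simp
      obtain ys where y: "T' = Node ys" by (cases T')
      then have "ys = []" using less.prems \<open>n = 0\<close> by (cases ys) auto
      then show ?thesis using y Node Nil by simp
    next
      case (Cons t ts)
      then have "n \<ge> 1" using less.prems Node by simp
      obtain ys where y: "T' = Node ys" by (cases T')
      then have "ys \<noteq> []" using less.prems \<open>n \<ge> 1\<close> by auto
      then obtain t' ts' where T': "T' = Node (t' # ts')" using y by (cases ys) auto
      have T: "T = Node (t # ts)" using Node Cons by simp
      have ne: "n = Suc (edges t) + edges (Node ts)" "n = Suc (edges t') + edges (Node ts')"
        using less.prems T T' by auto
      have S: "val (Node (t # ts)) = val (Node (t' # ts'))" using less.prems T T' by metis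
      show ?thesis
      proof (cases "ts = []"; cases "ts' = []")
        assume a: "ts = []" "ts' = []"
        have "shp 1 0 (val t) = shp 1 0 (val t')" using S unfolding a val_cons_nil .
        then have "val t = val t'" by (rule shp_inj)
        moreover have "edges t < n" "edges t = edges t'" using ne a by auto
        ultimately show ?thesis using T T' a less.IH[of "edges t" t t'] by metis
      next
        assume a: "ts = []" "ts' \<noteq> []"
        have "(Suc (Suc (edges t')), Suc (edges t')) \<in> val (Node (t # ts))"
          by (subst S) (rule dec_cons(1)[OF a(2)])
        moreover have "\<forall>p\<in>val (Node (t # ts)). snd p + 2 \<le> fst p" unfolding a(1) by (rule dec_nil)
        ultimately have "Suc (edges t') + 2 \<le> Suc (Suc (edges t'))" by fastforce
        then show ?thesis by simp
      next
        assume a: "ts \<noteq> []" "ts' = []"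
        have "(Suc (Suc (edges t)), Suc (edges t)) \<in> val (Node (t' # ts'))"
          by (subst S[symmetric]) (rule dec_cons(1)[OF a(1)])
        moreover have "\<forall>p\<in>val (Node (t' # ts')). snd p + 2 \<le> fst p" unfolding a(2) by (rule dec_nil)
        ultimately have "Suc (edges t) + 2 \<le> Suc (Suc (edges t))" by fastforce
        then show ?thesis by simp
      next
        assume a: "ts \<noteq> []" "ts' \<noteq> []"
        define V where "V = val (Node (t # ts))"
        have V': "V = val (Node (t' # ts'))" using S V_def by simp
        have c1: "(Suc (Suc (edges t)), Suc (edges t)) \<in> V" using dec_cons(1)[OF a(1), of t] V_def by simp
        have c2: "(Suc (Suc (edges t')), Suc (edges t')) \<in> V" using dec_cons(1)[OF a(2), of t'] V' by simp
        have d1: "\<forall>p\<in>V. Suc (snd p) = fst p \<longrightarrow> Suc (Suc (edges t)) \<le> fst p" using dec_cons(2)[OF a(1), of t] V_def by simp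
        have d2: "\<forall>p\<in>V. Suc (snd p) = fst p \<longrightarrow> Suc (Suc (edges t')) \<le> fst p" using dec_cons(2)[OF a(2), of t'] V' by simp
        have k1: "Suc (Suc (edges t')) \<le> Suc (Suc (edges t))" using d2 c1 by fastforce
        have k2: "Suc (Suc (edges t)) \<le> Suc (Suc (edges t'))" using d1 c2 by fastforce
        have et: "edges t = edges t'" using k1 k2 by simp
        have e3: "{p\<in>V. fst p \<le> Suc (edges t)} = shp 1 0 (val t)" using dec_cons(3)[OF a(1), of t] V_def by simp
        have e3': "{p\<in>V. fst p \<le> Suc (edges t)} = shp 1 0 (val t')" using dec_cons(3)[OF a(2), of t'] V' et by simp
        have "val t = val t'" using e3 e3' shp_inj by metis
        moreover have "edges t < n" using ne by auto
        ultimately have tt: "t = t'" using less.IH[of "edges t" t t'] et by metis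
        have e4: "{p\<in>V. Suc (Suc (edges t)) < fst p} = shp (Suc (edges t)) (Suc (edges t)) (val (Node ts))"
          using dec_cons(4)[OF a(1), of t] V_def by simp
        have e4': "{p\<in>V. Suc (Suc (edges t)) < fst p} = shp (Suc (edges t)) (Suc (edges t)) (val (Node ts'))"
          using dec_cons(4)[OF a(2), of t'] V' et by simp
        have "val (Node ts) = val (Node ts')" using e4 e4' shp_inj by metis
        moreover have "edges (Node ts) < n" "edges (Node ts) = edges (Node ts')" using ne et by auto
        ultimately have "Node ts = Node ts'" using less.IH[of "edges (Node ts)" "Node ts" "Node ts'"] by metis
        then show ?thesis using T T' tt by simp
      qed
    qed
  qed
qed

definition ush :: "nat \<Rightarrow> nat \<Rightarrow> (nat \<times> nat) set \<Rightarrow> (nat \<times> nat) set" where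
  "ush x y S = (\<lambda>(a,b). (a-x, b-y)) ` S"

lemma shp_ush: "\<forall>p\<in>A. x \<le> fst p \<and> y \<le> snd p \<Longrightarrow> shp x y (ush x y A) = A"
proof -
  assume h: "\<forall>p\<in>A. x \<le> fst p \<and> y \<le> snd p"
  have "shp x y (ush x y A) = ((\<lambda>(a,b). (a+x, b+y)) \<circ> (\<lambda>(a,b). (a-x, b-y))) ` A"
    unfolding shp_def ush_def image_comp ..
  also have "\<dots> = id ` A"
  proof (rule image_cong[OF refl])
    fix p assume "p \<in> A"
    then show "((\<lambda>(a,b). (a+x, b+y)) \<circ> (\<lambda>(a,b). (a-x, b-y))) p = id p"
      using h by (cases p) auto
  qed
  finally show ?thesis by simp
qed

lemma ush_mem: "q \<in> ush x y A \<longleftrightarrow> (\<exists>a b. (a,b) \<in> A \<and> q = (a-x, b-y))"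
  unfolding ush_def by auto

lemma valid_ush:
  assumes "\<forall>p\<in>A. x < fst p \<and> y < snd p \<and> snd p - y < fst p - x \<and> fst p \<le> m + x"
    and "\<forall>p\<in>A. \<forall>q\<in>A. fst p < fst q \<longleftrightarrow> snd p < snd q"
  shows "valid m (ush x y A)"
  unfolding valid_def
proof (intro conjI ballI)
  fix p assume "p \<in> ush x y A"
  then obtain a b where ab: "(a,b) \<in> A" "p = (a-x, b-y)" unfolding ush_mem by blast
  then show "1 \<le> snd p" "snd p < fst p" "fst p \<le> m" using assms(1) by fastforce+
next
  fix p q assume "p \<in> ush x y A" "q \<in> ush x y A"
  then obtain a b c d where ab: "(a,b) \<in> A" "p = (a-x, b-y)" "(c,d) \<in> A" "q = (c-x, d-y)"
    unfolding ush_mem by blast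
  have "x < a" "y < b" "x < c" "y < d" using ab assms(1) by fastforce+
  moreover have "a < c \<longleftrightarrow> b < d" using ab assms(2) by fastforce
  ultimately show "fst p < fst q \<longleftrightarrow> snd p < snd q" using ab by auto
qed

lemma valid_same_fst: "valid n S \<Longrightarrow> (a,b) \<in> S \<Longrightarrow> (a,c) \<in> S \<Longrightarrow> b = c"
  unfolding valid_def by (metis fst_conv snd_conv nat_neq_iff)

lemma val_surj: "valid n S \<Longrightarrow> \<exists>T. edges T = n \<and> val T = S"
proof (induction n arbitrary: S rule: less_induct)
  case (less n S)
  have V1: "\<forall>p\<in>S. 1 \<le> snd p \<and> snd p < fst p \<and> fst p \<le> n" and
       V2: "\<forall>p\<in>S. \<forall>q\<in>S. fst p < fst q \<longleftrightarrow> snd p < snd q"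
    using less.prems unfolding valid_def by blast+
  show ?case
  proof (cases "n = 0")
    case True
    then have "S = {}" using V1 by fastforce
    then show ?thesis using True by (intro exI[of _ "Node []"]) simp
  next
    case False
    show ?thesis
    proof (cases "\<exists>p\<in>S. Suc (snd p) = fst p")
      case False
      have "valid (n-1) (ush 1 0 S)"
      proof (rule valid_ush)
        show "\<forall>p\<in>S. 1 < fst p \<and> 0 < snd p \<and> snd p - 0 < fst p - 1 \<and> fst p \<le> n - 1 + 1"
          using V1 False by fastforce
      qed (use V2 in blast)
      moreover have "n - 1 < n" using \<open>n \<noteq> 0\<close> by simp
      ultimately obtain t where t: "edges t = n - 1" "val t = ush 1 0 S"
        using less.IH by blast
      have "edges (Node [t]) = n" using t \<open>n \<noteq> 0\<close> by simp
      moreover have "val (Node [t]) = S"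
        unfolding val_cons_nil t(2) by (rule shp_ush) (use V1 in fastforce)
      ultimately show ?thesis by blast
    next
      case True
      define P where "P = (\<lambda>a. \<exists>p\<in>S. Suc (snd p) = fst p \<and> fst p = a)"
      obtain p0 where p0: "p0 \<in> S" "Suc (snd p0) = fst p0" using True by blast
      define j where "j = (LEAST a. P a)"
      have Pj: "P j" unfolding j_def by (rule LeastI[of P "fst p0"]) (use p0 P_def in blast)
      have jmin: "\<And>p. p \<in> S \<Longrightarrow> Suc (snd p) = fst p \<Longrightarrow> j \<le> fst p"
        unfolding j_def by (rule Least_le) (auto simp: P_def)
      define k where "k = j - 1"
      obtain q where q: "q \<in> S" "Suc (snd q) = fst q" "fst q = j" using Pj P_def by blast
      have kq: "q = (Suc k, k)" using q k_def by (cases q) auto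
      have kS: "(Suc k, k) \<in> S" using q kq by simp
      have k1: "1 \<le> k" "Suc k \<le> n" using V1 kS by fastforce+
      have kmin: "\<And>p. p \<in> S \<Longrightarrow> Suc (snd p) = fst p \<Longrightarrow> Suc k \<le> fst p"
        using jmin k_def q by fastforce
      define A where "A = {p\<in>S. fst p \<le> k}"
      define B where "B = {p\<in>S. Suc k < fst p}"
      have SABC: "S = A \<union> insert (Suc k, k) B"
      proof
        show "A \<union> insert (Suc k, k) B \<subseteq> S" using kS A_def B_def by blast
        show "S \<subseteq> A \<union> insert (Suc k, k) B"
        proof
          fix p assume pS: "p \<in> S"
          show "p \<in> A \<union> insert (Suc k, k) B"
          proof (cases "fst p = Suc k")
            case True
            then have "p = (Suc k, k)" using valid_same_fst[OF less.prems, of "Suc k" "snd p" k] pS kS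
              by (cases p) auto
            then show ?thesis by blast
          next
            case False
            then show ?thesis using pS A_def B_def by auto
          qed
        qed
      qed
      have Aprop: "\<forall>p\<in>A. 1 < fst p \<and> 0 < snd p \<and> snd p - 0 < fst p - 1 \<and> fst p \<le> (k - 1) + 1"
      proof
        fix p assume "p \<in> A"
        then have pS: "p \<in> S" and pk: "fst p \<le> k" using A_def by auto
        have "Suc (snd p) \<noteq> fst p" using kmin[OF pS] pk by fastforce
        then show "1 < fst p \<and> 0 < snd p \<and> snd p - 0 < fst p - 1 \<and> fst p \<le> (k - 1) + 1"
          using V1 pS pk k1 by fastforce
      qed
      have Bprop: "\<forall>p\<in>B. k < fst p \<and> k < snd p \<and> snd p - k < fst p - k \<and> fst p \<le> (n - k) + k"
      proof
        fix p assume "p \<in> B"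
        then have pS: "p \<in> S" and pk: "Suc k < fst p" using B_def by auto
        have "k < snd p" using V2 pS kS pk by fastforce
        then show "k < fst p \<and> k < snd p \<and> snd p - k < fst p - k \<and> fst p \<le> (n - k) + k"
          using V1 pS pk k1 by fastforce
      qed
      have vA: "valid (k-1) (ush 1 0 A)"
        by (rule valid_ush[OF Aprop]) (use V2 A_def in blast)
      have vB: "valid (n-k) (ush k k B)"
        by (rule valid_ush[OF Bprop]) (use V2 B_def in blast)
      have lt1: "k - 1 < n" "n - k < n" using k1 by auto
      obtain t where t: "edges t = k - 1" "val t = ush 1 0 A"
        using less.IH[OF lt1(1) vA] by blast
      obtain s where s: "edges s = n - k" "val s = ush k k B"
        using less.IH[OF lt1(2) vB] by blast
      obtain ts where ts: "s = Node ts" by (cases s)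
      have tsne: "ts \<noteq> []" using s ts k1 by auto
      have ek: "Suc (edges t) = k" using t k1 by simp
      have "edges (Node (t # ts)) = n" using t s ts k1 by simp
      moreover have "val (Node (t # ts)) = S"
      proof -
        have "val (Node (t # ts)) = shp 1 0 (val t) \<union> insert (Suc k, k) (shp k k (val (Node ts)))"
          using tsne ek by simp
        also have "shp 1 0 (val t) = A" unfolding t(2) by (rule shp_ush) (use Aprop in auto)
        also have "shp k k (val (Node ts)) = B" unfolding ts[symmetric] s(2) by (rule shp_ush) (use Bprop in auto)
        finally show ?thesis using SABC by simp
      qed
      ultimately show ?thesis by blast
    qed
  qed
qed

lemma fst_shp: "i \<in> fst ` shp x y A \<longleftrightarrow> x \<le> i \<and> i - x \<in> fst ` A"
  unfolding shp_def by (force simp: image_iff)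

lemma nth_nf: "j < length zs \<Longrightarrow> nf zs ! j = (if j = 0 then True else zs ! j)"
  by (cases zs) (auto simp: nth_Cons split: nat.splits)

lemma fl_val: "i \<in> fst ` val T \<longleftrightarrow> (1 \<le> i \<and> i \<le> edges T \<and> fl T ! (i - 1))"
proof (induction T arbitrary: i rule: fl.induct)
  case 1
  then show ?case by simp
next
  case (2 t ts)
  let ?k = "Suc (edges t)"
  let ?m = "edges (Node ts)"
  let ?zs = "fl (Node ts)"
  have lt: "length (fl t) = edges t" "length ?zs = ?m" by (simp_all add: fl_len)
  have mpos: "ts \<noteq> [] \<longleftrightarrow> 1 \<le> ?m" by (cases ts) auto
  have L: "i \<in> fst ` val (Node (t # ts)) \<longleftrightarrow>
     (1 \<le> i \<and> i - 1 \<in> fst ` val t) \<or> (ts \<noteq> [] \<and> (i = Suc ?k \<or> (?k \<le> i \<and> i - ?k \<in> fst ` val (Node ts))))"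
  proof -
    have "i \<in> fst ` val (Node (t # ts)) \<longleftrightarrow> i \<in> fst ` shp 1 0 (val t) \<or>
       (ts \<noteq> [] \<and> (i = Suc ?k \<or> i \<in> fst ` shp ?k ?k (val (Node ts))))"
      by (cases "ts = []") (simp_all add: image_Un, blast)
    then show ?thesis unfolding fst_shp by simp
  qed
  have R: "fl (Node (t # ts)) = False # fl t @ nf ?zs" by simp
  have E: "edges (Node (t # ts)) = ?k + ?m" by simp
  show ?case
  proof (cases "i \<le> ?k")
    case True
    have "\<not> (?k \<le> i \<and> i - ?k \<in> fst ` val (Node ts))"
      using 2(2)[of "i - ?k"] True by auto
    moreover have "i \<noteq> Suc ?k" using True by simp
    ultimately have "i \<in> fst ` val (Node (t # ts)) \<longleftrightarrow> (1 \<le> i \<and> i - 1 \<in> fst ` val t)"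
      using L by blast
    also have "\<dots> \<longleftrightarrow> (2 \<le> i \<and> i - 1 \<le> edges t \<and> fl t ! (i - 2))"
      using 2(1)[of "i - 1"] by (auto simp: numeral_2_eq_2)
    also have "\<dots> \<longleftrightarrow> (1 \<le> i \<and> i \<le> edges (Node (t # ts)) \<and> fl (Node (t # ts)) ! (i - 1))"
    proof -
      have "1 \<le> i \<Longrightarrow> i \<le> ?k \<Longrightarrow> fl (Node (t # ts)) ! (i - 1) = (if i = 1 then False else fl t ! (i - 2))"
      proof -
        assume a: "1 \<le> i" "i \<le> ?k"
        show ?thesis
        proof (cases "i = 1")
          case False
          then have e: "i - 1 = Suc (i - 2)" using a by simp
          have "i - 2 < length (fl t)" using a False lt by simp
          then show ?thesis unfolding R e using False by (simp add: nth_append)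
        qed (simp add: R)
      qed
      then show ?thesis using True E by (cases "i = 1") auto
    qed
    finally show ?thesis .
  next
    case False
    have "\<not> (1 \<le> i \<and> i - 1 \<in> fst ` val t)"
      using 2(1)[of "i - 1"] False by auto
    then have "i \<in> fst ` val (Node (t # ts)) \<longleftrightarrow> (ts \<noteq> [] \<and> (i = Suc ?k \<or> i - ?k \<in> fst ` val (Node ts)))"
      using L False by auto
    also have "\<dots> \<longleftrightarrow> (ts \<noteq> [] \<and> (i = Suc ?k \<or> (Suc ?k < i \<and> i - ?k \<le> ?m \<and> ?zs ! (i - ?k - 1))))"
      using 2(2)[of "i - ?k"] False by auto
    also have "\<dots> \<longleftrightarrow> (1 \<le> i \<and> i \<le> edges (Node (t # ts)) \<and> fl (Node (t # ts)) ! (i - 1))"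
    proof -
      have "i \<le> ?k + ?m \<Longrightarrow> fl (Node (t # ts)) ! (i - 1) = nf ?zs ! (i - 1 - ?k)"
        unfolding R using lt False by (cases "i - 1") (auto simp: nth_append)
      moreover have "i \<le> ?k + ?m \<Longrightarrow> nf ?zs ! (i - 1 - ?k) = (if i = Suc ?k then True else ?zs ! (i - ?k - 1))"
        using nth_nf[of "i - 1 - ?k" ?zs] lt False by auto
      ultimately show ?thesis using False E mpos by auto
    qed
    finally show ?thesis .
  qed
qed

definition defg :: "nat \<Rightarrow> (nat \<Rightarrow> nat) \<Rightarrow> (nat \<times> nat) set" where
  "defg n \<pi> = (\<lambda>i. (i, \<pi> i)) ` {i \<in> {1..n}. \<pi> i < i}"

lemma S321_perm: "\<pi> \<in> S321 n \<Longrightarrow> \<pi> permutes {1..n}"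
  and S321_av: "\<pi> \<in> S321 n \<Longrightarrow> avoids321 n \<pi>"
  unfolding S321_def by auto

lemma card_below:
  assumes p: "\<pi> permutes {1..n}" and j: "j \<in> {1..n}"
  shows "card {c \<in> {1..n}. \<pi> c < \<pi> j} = \<pi> j - 1"
proof -
  have pj: "\<pi> j \<in> {1..n}" using permutes_in_image[OF p] j by simp
  have "\<pi> ` {c \<in> {1..n}. \<pi> c < \<pi> j} = {1..<\<pi> j}"
  proof
    show "\<pi> ` {c \<in> {1..n}. \<pi> c < \<pi> j} \<subseteq> {1..<\<pi> j}"
    proof
      fix v assume "v \<in> \<pi> ` {c \<in> {1..n}. \<pi> c < \<pi> j}"
      then obtain c where c: "c \<in> {1..n}" "\<pi> c < \<pi> j" "v = \<pi> c" by blast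
      have "\<pi> c \<in> {1..n}" using permutes_in_image[OF p, of c] c(1) by simp
      then show "v \<in> {1..<\<pi> j}" using c pj by auto
    qed
    show "{1..<\<pi> j} \<subseteq> \<pi> ` {c \<in> {1..n}. \<pi> c < \<pi> j}"
    proof
      fix v assume v: "v \<in> {1..<\<pi> j}"
      then have "v \<in> {1..n}" using pj by auto
      then have "v \<in> \<pi> ` {1..n}" by (simp only: permutes_image[OF p])
      then obtain c where "c \<in> {1..n}" "\<pi> c = v" by (elim imageE) simp
      then show "v \<in> \<pi> ` {c \<in> {1..n}. \<pi> c < \<pi> j}" using v by auto
    qed
  qed
  moreover have "inj_on \<pi> {c \<in> {1..n}. \<pi> c < \<pi> j}" using permutes_inj_on[OF p] .
  ultimately show ?thesis by (metis card_image card_atLeastLessThan)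
qed

lemma card_above:
  assumes p: "\<pi> permutes {1..n}" and j: "j \<in> {1..n}"
  shows "card {c \<in> {1..n}. \<pi> j < \<pi> c} = n - \<pi> j"
proof -
  have pj: "\<pi> j \<in> {1..n}" using permutes_in_image[OF p] j by simp
  have "\<pi> ` {c \<in> {1..n}. \<pi> j < \<pi> c} = {\<pi> j<..n}"
  proof
    show "\<pi> ` {c \<in> {1..n}. \<pi> j < \<pi> c} \<subseteq> {\<pi> j<..n}"
    proof
      fix v assume "v \<in> \<pi> ` {c \<in> {1..n}. \<pi> j < \<pi> c}"
      then obtain c where c: "c \<in> {1..n}" "\<pi> j < \<pi> c" "v = \<pi> c" by blast
      have "\<pi> c \<in> {1..n}" using permutes_in_image[OF p, of c] c(1) by simp
      then show "v \<in> {\<pi> j<..n}" using c pj by auto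
    qed
    show "{\<pi> j<..n} \<subseteq> \<pi> ` {c \<in> {1..n}. \<pi> j < \<pi> c}"
    proof
      fix v assume v: "v \<in> {\<pi> j<..n}"
      then have "v \<in> {1..n}" using pj by auto
      then have "v \<in> \<pi> ` {1..n}" by (simp only: permutes_image[OF p])
      then obtain c where "c \<in> {1..n}" "\<pi> c = v" by (elim imageE) simp
      then show "v \<in> \<pi> ` {c \<in> {1..n}. \<pi> j < \<pi> c}" using v by auto
    qed
  qed
  moreover have "inj_on \<pi> {c \<in> {1..n}. \<pi> j < \<pi> c}" using permutes_inj_on[OF p] .
  ultimately show ?thesis by (metis card_image card_greaterThanAtMost)
qed

lemma wex_inc:
  assumes "\<pi> \<in> S321 n" "1 \<le> i" "i < j" "j \<le> n" "i \<le> \<pi> i" "j \<le> \<pi> j"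
  shows "\<pi> i < \<pi> j"
proof (rule ccontr)
  assume "\<not> \<pi> i < \<pi> j"
  have p: "\<pi> permutes {1..n}" using assms(1) S321_perm by blast
  have "\<pi> i \<noteq> \<pi> j" using permutes_inj[OF p] assms(3) by (metis inj_eq less_irrefl)
  then have ji: "\<pi> j < \<pi> i" using \<open>\<not> \<pi> i < \<pi> j\<close> by simp
  define X where "X = {c \<in> {1..n}. \<pi> c < \<pi> j}"
  have cX: "card X = \<pi> j - 1" unfolding X_def by (rule card_below[OF p]) (use assms in auto)
  have "\<not> X \<subseteq> {1..<j} - {i}"
  proof
    assume "X \<subseteq> {1..<j} - {i}"
    then have "card X \<le> card ({1..<j} - {i})" by (intro card_mono) auto
    also have "\<dots> = j - 2" using assms by simp
    finally show False using cX assms by simp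
  qed
  then obtain c where c: "c \<in> X" "c \<notin> {1..<j} - {i}" by blast
  have "c \<noteq> i" using c ji X_def by auto
  moreover have "c \<noteq> j" using c X_def by auto
  ultimately have "j < c" "c \<le> n" "\<pi> c < \<pi> j" using c X_def by auto
  then show False using S321_av[OF assms(1)] assms ji unfolding avoids321_def by blast
qed

lemma def_inc:
  assumes "\<pi> \<in> S321 n" "1 \<le> i" "i < j" "j \<le> n" "\<pi> i < i" "\<pi> j < j"
  shows "\<pi> i < \<pi> j"
proof (rule ccontr)
  assume "\<not> \<pi> i < \<pi> j"
  have p: "\<pi> permutes {1..n}" using assms(1) S321_perm by blast
  have "\<pi> i \<noteq> \<pi> j" using permutes_inj[OF p] assms(3) by (metis inj_eq less_irrefl)
  then have ji: "\<pi> j < \<pi> i" using \<open>\<not> \<pi> i < \<pi> j\<close> by simp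
  define Y where "Y = {c \<in> {1..n}. \<pi> i < \<pi> c}"
  have cY: "card Y = n - \<pi> i" unfolding Y_def by (rule card_above[OF p]) (use assms in auto)
  have "\<not> Y \<subseteq> {i<..n} - {j}"
  proof
    assume "Y \<subseteq> {i<..n} - {j}"
    then have "card Y \<le> card ({i<..n} - {j})" by (intro card_mono) auto
    also have "\<dots> = n - i - 1" using assms by simp
    finally show False using cY assms by simp
  qed
  then obtain c where c: "c \<in> Y" "c \<notin> {i<..n} - {j}" by blast
  have "c \<noteq> i" using c Y_def by auto
  moreover have "c \<noteq> j" using c ji Y_def by auto
  ultimately have "c < i" "1 \<le> c" "\<pi> i < \<pi> c" using c Y_def by auto
  then show False using S321_av[OF assms(1)] assms ji unfolding avoids321_def by blast
qed

lemma valid_defg: "\<pi> \<in> S321 n \<Longrightarrow> valid n (defg n \<pi>)"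
proof -
  assume a: "\<pi> \<in> S321 n"
  have p: "\<pi> permutes {1..n}" using a S321_perm by blast
  have "\<forall>p\<in>defg n \<pi>. 1 \<le> snd p \<and> snd p < fst p \<and> fst p \<le> n"
    unfolding defg_def using permutes_in_image[OF p] by fastforce
  moreover have "\<forall>p\<in>defg n \<pi>. \<forall>q\<in>defg n \<pi>. fst p < fst q \<longleftrightarrow> snd p < snd q"
  proof (intro ballI)
    fix p q assume "p \<in> defg n \<pi>" "q \<in> defg n \<pi>"
    then obtain i j where ij: "p = (i, \<pi> i)" "q = (j, \<pi> j)" "i \<in> {1..n}" "j \<in> {1..n}"
       "\<pi> i < i" "\<pi> j < j" unfolding defg_def by blast
    have "i < j \<Longrightarrow> \<pi> i < \<pi> j" using def_inc[OF a, of i j] ij by auto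
    moreover have "j < i \<Longrightarrow> \<pi> j < \<pi> i" using def_inc[OF a, of j i] ij by auto
    ultimately show "fst p < fst q \<longleftrightarrow> snd p < snd q" using ij by (metis fst_conv snd_conv nat_neq_iff less_not_sym less_irrefl)
  qed
  ultimately show ?thesis unfolding valid_def by blast
qed

lemma rank_image:
  assumes "finite E" "\<forall>x\<in>E. \<forall>y\<in>E. x < y \<longrightarrow> f x < (f y::nat)" "x \<in> E"
  shows "card {v \<in> f ` E. v < f x} = card {e \<in> E. e < (x::nat)}"
proof -
  have inj: "inj_on f E"
    by (rule inj_onI) (metis assms(2) nat_neq_iff less_irrefl)
  have "{v \<in> f ` E. v < f x} = f ` {e \<in> E. e < x}"
  proof
    show "f ` {e \<in> E. e < x} \<subseteq> {v \<in> f ` E. v < f x}" using assms by auto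
    show "{v \<in> f ` E. v < f x} \<subseteq> f ` {e \<in> E. e < x}"
    proof
      fix v assume "v \<in> {v \<in> f ` E. v < f x}"
      then obtain e where e: "e \<in> E" "v = f e" "f e < f x" by blast
      have "e < x"
      proof (rule ccontr)
        assume "\<not> e < x"
        then have "x < e \<or> x = e" by auto
        then show False using assms(2,3) e by (metis less_asym less_irrefl)
      qed
      then show "v \<in> f ` {e \<in> E. e < x}" using e by blast
    qed
  qed
  then show ?thesis using inj by (simp add: card_image inj_on_subset)
qed

lemma mono_same_image:
  assumes fin: "finite E"
    and f: "\<forall>x\<in>E. \<forall>y\<in>E. x < y \<longrightarrow> f x < (f y::nat)"
    and g: "\<forall>x\<in>E. \<forall>y\<in>E. x < y \<longrightarrow> g x < (g y::nat)"
    and im: "f ` E = g ` E" and x: "x \<in> (E::nat set)"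
  shows "f x = g x"
proof (rule ccontr)
  assume ne: "f x \<noteq> g x"
  have cf: "card {v \<in> f ` E. v < f x} = card {e \<in> E. e < x}" by (rule rank_image[OF fin f x])
  have cg: "card {v \<in> f ` E. v < g x} = card {e \<in> E. e < x}" using rank_image[OF fin g x] im by simp
  have fE: "f x \<in> f ` E" "g x \<in> f ` E" using x im by auto
  have finI: "finite (f ` E)" using fin by simp
  show False
  proof (cases "f x < g x")
    case True
    have "{v \<in> f ` E. v < f x} \<subset> {v \<in> f ` E. v < g x}" using True fE by auto
    then have "card {v \<in> f ` E. v < f x} < card {v \<in> f ` E. v < g x}"
      by (rule psubset_card_mono[rotated]) (use finI in simp)
    then show False using cf cg by simp
  next
    case False
    then have lt: "g x < f x" using ne by simp
    have "{v \<in> f ` E. v < g x} \<subset> {v \<in> f ` E. v < f x}" using lt fE by auto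
    then have "card {v \<in> f ` E. v < g x} < card {v \<in> f ` E. v < f x}"
      by (rule psubset_card_mono[rotated]) (use finI in simp)
    then show False using cf cg by simp
  qed
qed

lemma defg_unique:
  assumes a: "\<pi> \<in> S321 n" and b: "\<sigma> \<in> S321 n" and eq: "defg n \<pi> = defg n \<sigma>"
  shows "\<pi> = \<sigma>"
proof -
  have p: "\<pi> permutes {1..n}" and s: "\<sigma> permutes {1..n}" using a b S321_perm by blast+
  define D where "D = {i \<in> {1..n}. \<pi> i < i}"
  have Dpi: "\<And>i. i \<in> D \<Longrightarrow> (i, \<pi> i) \<in> defg n \<sigma>" unfolding eq[symmetric] unfolding D_def defg_def by blast
  have onD: "\<And>i. i \<in> D \<Longrightarrow> \<sigma> i = \<pi> i \<and> \<sigma> i < i \<and> i \<in> {1..n}"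
  proof -
    fix i assume "i \<in> D"
    from Dpi[OF this] obtain k where "(i, \<pi> i) = (k, \<sigma> k)" "k \<in> {1..n}" "\<sigma> k < k"
      unfolding defg_def by blast
    then show "\<sigma> i = \<pi> i \<and> \<sigma> i < i \<and> i \<in> {1..n}" by auto
  qed
  have Ds: "D = {i \<in> {1..n}. \<sigma> i < i}"
  proof
    show "D \<subseteq> {i \<in> {1..n}. \<sigma> i < i}" using onD by blast
    show "{i \<in> {1..n}. \<sigma> i < i} \<subseteq> D"
    proof
      fix i assume i: "i \<in> {i \<in> {1..n}. \<sigma> i < i}"
      then have "(i, \<sigma> i) \<in> defg n \<pi>" unfolding eq unfolding defg_def using i by blast
      then obtain k where "(i, \<sigma> i) = (k, \<pi> k)" "k \<in> {1..n}" "\<pi> k < k"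
        unfolding defg_def by blast
      then show "i \<in> D" unfolding D_def by auto
    qed
  qed
  define E where "E = {1..n} - D"
  have Ep: "\<And>i. i \<in> E \<Longrightarrow> i \<in> {1..n} \<and> i \<le> \<pi> i" unfolding E_def D_def by auto
  have Es: "\<And>i. i \<in> E \<Longrightarrow> i \<in> {1..n} \<and> i \<le> \<sigma> i" unfolding E_def Ds by auto
  have imD: "\<pi> ` D = \<sigma> ` D" using onD by (metis image_cong)
  have "\<pi> ` E = \<pi> ` {1..n} - \<pi> ` D"
    unfolding E_def by (rule inj_on_image_set_diff[OF permutes_inj_on[OF p]]) (auto simp: D_def)
  also have "\<dots> = \<sigma> ` {1..n} - \<sigma> ` D" using imD permutes_image[OF p] permutes_image[OF s] by simp
  also have "\<dots> = \<sigma> ` E"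
    unfolding E_def by (rule inj_on_image_set_diff[OF permutes_inj_on[OF s], symmetric]) (auto simp: D_def)
  finally have imE: "\<pi> ` E = \<sigma> ` E" .
  have monp: "\<forall>x\<in>E. \<forall>y\<in>E. x < y \<longrightarrow> \<pi> x < \<pi> y"
  proof (intro ballI impI)
    fix x y assume "x \<in> E" "y \<in> E" "x < y"
    then show "\<pi> x < \<pi> y" using wex_inc[OF a, of x y] Ep by auto
  qed
  have mons: "\<forall>x\<in>E. \<forall>y\<in>E. x < y \<longrightarrow> \<sigma> x < \<sigma> y"
  proof (intro ballI impI)
    fix x y assume "x \<in> E" "y \<in> E" "x < y"
    then show "\<sigma> x < \<sigma> y" using wex_inc[OF b, of x y] Es by auto
  qed
  have finE: "finite E" unfolding E_def by simp
  show "\<pi> = \<sigma>"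
  proof
    fix i
    show "\<pi> i = \<sigma> i"
    proof (cases "i \<in> {1..n}")
      case False
      then show ?thesis using permutes_not_in[OF p] permutes_not_in[OF s] by metis
    next
      case True
      show ?thesis
      proof (cases "i \<in> D")
        case True then show ?thesis using onD by metis
      next
        case False
        then have "i \<in> E" using \<open>i \<in> {1..n}\<close> E_def by blast
        then show ?thesis using mono_same_image[OF finE monp mons imE] by blast
      qed
    qed
  qed
qed

locale vsS =
  fixes n :: nat and S :: "(nat \<times> nat) set"
  assumes vS: "valid n S"
begin

definition "D = fst ` S"
definition "W = snd ` S"
definition "E = {1..n} - D"
definition "V = {1..n} - W"
definition "g i = (THE b. (i, b) \<in> S)"
definition "sl = sorted_list_of_set V"
definition "r i = card {e \<in> E. e < i}"
definition "f i = sl ! r i"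
definition "pp i = (if i \<in> D then g i else if i \<in> E then f i else i)"

lemma bnd: "(a, b) \<in> S \<Longrightarrow> 1 \<le> b \<and> b < a \<and> a \<le> n"
  using vS unfolding valid_def by fastforce

lemma chain: "(a, b) \<in> S \<Longrightarrow> (c, d) \<in> S \<Longrightarrow> a < c \<longleftrightarrow> b < d"
  using vS unfolding valid_def by fastforce

lemma same_fst: "(a, b) \<in> S \<Longrightarrow> (a, d) \<in> S \<Longrightarrow> b = d"
  using chain[of a b a d] chain[of a d a b] by (metis nat_neq_iff)

lemma same_snd: "(a, b) \<in> S \<Longrightarrow> (c, b) \<in> S \<Longrightarrow> a = c"
  using chain[of a b c b] chain[of c b a b] by (metis nat_neq_iff)

lemma gS: "(a, b) \<in> S \<Longrightarrow> g a = b"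
  unfolding g_def using same_fst by blast

lemma gD: "d \<in> D \<Longrightarrow> (d, g d) \<in> S"
  unfolding D_def using gS by force

lemma Dsub: "D \<subseteq> {1..n}" unfolding D_def using bnd by force
lemma Wsub: "W \<subseteq> {1..n}" unfolding W_def using bnd by force

lemma finS: "finite S"
proof -
  have "S \<subseteq> {1..n} \<times> {1..n}" using bnd by force
  then show ?thesis by (rule finite_subset) simp
qed

lemma cardDW: "card D = card W"
proof -
  have "inj_on fst S" by (rule inj_onI) (metis prod.collapse same_fst)
  moreover have "inj_on snd S" by (rule inj_onI) (metis prod.collapse same_snd)
  ultimately show ?thesis unfolding D_def W_def by (simp add: card_image)
qed

lemma finD: "finite D" and finW: "finite W" and finE: "finite E" and finV: "finite V"
  unfolding E_def V_def using finite_subset[OF Dsub] finite_subset[OF Wsub] by auto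

lemma cardEV: "card E = card V"
proof -
  have "card E = n - card D" unfolding E_def using card_Diff_subset[OF finD Dsub] by simp
  moreover have "card V = n - card W" unfolding V_def using card_Diff_subset[OF finW Wsub] by simp
  ultimately show ?thesis using cardDW by simp
qed

lemma g_inj: "inj_on g D"
proof (rule inj_onI)
  fix x y assume "x \<in> D" "y \<in> D" "g x = g y"
  then show "x = y" using gD[of x] gD[of y] same_snd by metis
qed

lemma g_img: "g ` D = W"
proof
  show "g ` D \<subseteq> W" using gD unfolding W_def by force
  show "W \<subseteq> g ` D"
  proof
    fix w assume "w \<in> W"
    then obtain a where "(a, w) \<in> S" unfolding W_def by force
    then show "w \<in> g ` D" using gS unfolding D_def by force
  qed
qed

lemma g_lt: "d \<in> D \<Longrightarrow> g d < d"
  using gD bnd by blast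

lemma g_mono: "x \<in> D \<Longrightarrow> y \<in> D \<Longrightarrow> x < y \<Longrightarrow> g x < g y"
  using gD chain by blast

lemma sl_props: "sorted_wrt (<) sl" "distinct sl" "set sl = V" "length sl = card V"
  unfolding sl_def using finV by auto

lemma r_lt: "i \<in> E \<Longrightarrow> r i < card E"
proof -
  assume i: "i \<in> E"
  have "{e \<in> E. e < i} \<subset> E" using i by auto
  then show ?thesis unfolding r_def by (rule psubset_card_mono[OF finE])
qed

lemma r_mono: "i \<in> E \<Longrightarrow> j \<in> E \<Longrightarrow> i < j \<Longrightarrow> r i < r j"
proof -
  assume ij: "i \<in> E" "j \<in> E" "i < j"
  have "{e \<in> E. e < i} \<subset> {e \<in> E. e < j}" using ij by auto
  then show ?thesis unfolding r_def by (rule psubset_card_mono[rotated]) (use finE in simp)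
qed

lemma f_in: "i \<in> E \<Longrightarrow> f i \<in> V"
  unfolding f_def using r_lt sl_props cardEV by (metis nth_mem)

lemma f_mono: "i \<in> E \<Longrightarrow> j \<in> E \<Longrightarrow> i < j \<Longrightarrow> f i < f j"
  unfolding f_def using r_mono r_lt sl_props(1,4) cardEV sorted_wrt_nth_less by metis

lemma f_inj: "inj_on f E"
  by (rule inj_onI) (metis f_mono nat_neq_iff)

lemma f_img: "f ` E = V"
proof (rule card_subset_eq[OF finV])
  show "f ` E \<subseteq> V" using f_in by blast
  show "card (f ` E) = card V" using card_image[OF f_inj] cardEV by simp
qed

lemma f_ge: "i \<in> E \<Longrightarrow> i \<le> f i"
proof (rule ccontr)
  assume i: "i \<in> E" and lt: "\<not> i \<le> f i"
  have i1: "i \<in> {1..n}" using i E_def by blast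
  define DL where "DL = {d \<in> D. d < i}"
  define WL where "WL = {w \<in> W. w < i}"
  have DL_sub: "DL \<subseteq> {1..<i}" unfolding DL_def using Dsub by auto
  have WL_sub: "WL \<subseteq> {1..<i}" unfolding WL_def using Wsub by auto
  have A: "{e \<in> E. e < i} = {1..<i} - DL" unfolding DL_def E_def using i1 by auto
  have B: "{v \<in> V. v < i} = {1..<i} - WL" unfolding WL_def V_def using i1 by auto
  have cA: "r i = (i - 1) - card DL" unfolding r_def A
    using card_Diff_subset[OF finite_subset[OF DL_sub] DL_sub] by simp
  have cB: "card {v \<in> V. v < i} = (i - 1) - card WL" unfolding B
    using card_Diff_subset[OF finite_subset[OF WL_sub] WL_sub] by simp
  have "g ` DL \<subseteq> WL" unfolding DL_def WL_def using g_img g_lt by fastforce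
  moreover have "card (g ` DL) = card DL" using g_inj by (simp add: DL_def card_image inj_on_subset)
  ultimately have "card DL \<le> card WL" using finite_subset[OF WL_sub] by (metis card_mono finite_atLeastLessThan)
  then have le: "card {v \<in> V. v < i} \<le> r i" using cA cB by simp
  define k where "k = r i"
  have klt: "k < length sl" using r_lt[OF i] cardEV sl_props k_def by simp
  have X: "(\<lambda>j. sl ! j) ` {0..k} \<subseteq> {v \<in> V. v < i}"
  proof
    fix v assume "v \<in> (\<lambda>j. sl ! j) ` {0..k}"
    then obtain j where j: "j \<le> k" "v = sl ! j" by auto
    have "sl ! j \<le> sl ! k"
      using sorted_wrt_nth_less[OF sl_props(1), of j k] j klt by (cases "j = k") auto
    moreover have "sl ! k < i" using lt unfolding f_def k_def by simp
    moreover have "sl ! j \<in> V" using j klt sl_props by (metis le_less_trans nth_mem)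
    ultimately show "v \<in> {v \<in> V. v < i}" using j by simp
  qed
  have "inj_on (\<lambda>j. sl ! j) {0..k}" by (rule inj_on_nth) (use sl_props klt in auto)
  then have "card ((\<lambda>j. sl ! j) ` {0..k}) = Suc k" by (simp add: card_image)
  moreover have "card ((\<lambda>j. sl ! j) ` {0..k}) \<le> card {v \<in> V. v < i}"
    by (rule card_mono[OF _ X]) (use finV in simp)
  ultimately show False using le k_def by simp
qed

lemma DE_disj: "D \<inter> E = {}" unfolding E_def by blast
lemma WV_disj: "W \<inter> V = {}" unfolding V_def by blast
lemma DE_un: "D \<union> E = {1..n}" unfolding E_def using Dsub by blast
lemma WV_un: "W \<union> V = {1..n}" unfolding V_def using Wsub by blast

lemma ppD: "i \<in> D \<Longrightarrow> pp i = g i" unfolding pp_def by simp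
lemma ppE: "i \<in> E \<Longrightarrow> pp i = f i" unfolding pp_def using DE_disj by auto

lemma pp_perm: "pp permutes {1..n}"
proof (rule bij_imp_permutes)
  have "bij_betw pp D W"
    unfolding bij_betw_def using g_inj g_img ppD by (metis inj_on_cong image_cong)
  moreover have "bij_betw pp E V"
    unfolding bij_betw_def using f_inj f_img ppE by (metis inj_on_cong image_cong)
  ultimately have "bij_betw pp (D \<union> E) (W \<union> V)" using WV_disj by (rule bij_betw_combine)
  then show "bij_betw pp {1..n} {1..n}" using DE_un WV_un by simp
next
  fix x assume "x \<notin> {1..n}"
  then show "pp x = x" unfolding pp_def using DE_un by auto
qed

lemma pp_defg: "defg n pp = S"
proof
  show "defg n pp \<subseteq> S"
  proof
    fix p assume "p \<in> defg n pp"
    then obtain i where i: "p = (i, pp i)" "i \<in> {1..n}" "pp i < i" unfolding defg_def by blast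
    have "i \<notin> E" using i f_ge ppE by fastforce
    then have "i \<in> D" using i DE_un by blast
    then show "p \<in> S" using i gD ppD by simp
  qed
  show "S \<subseteq> defg n pp"
  proof
    fix p assume pS: "p \<in> S"
    obtain a b where ab: "p = (a, b)" by (cases p)
    have aD: "a \<in> D" using pS ab D_def by force
    have "pp a = b" using ppD[OF aD] gS pS ab by simp
    moreover have "a \<in> {1..n}" "b < a" using bnd[of a b] pS ab by auto
    ultimately show "p \<in> defg n pp" unfolding defg_def ab by force
  qed
qed

lemma pp_av: "avoids321 n pp"
  unfolding avoids321_def
proof
  assume "\<exists>a b c. 1 \<le> a \<and> a < b \<and> b < c \<and> c \<le> n \<and> pp b < pp a \<and> pp c < pp b"
  then obtain a b c where abc: "1 \<le> a" "a < b" "b < c" "c \<le> n" "pp b < pp a" "pp c < pp b" by blast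
  have mono2: "\<And>x y. x \<in> {1..n} \<Longrightarrow> y \<in> {1..n} \<Longrightarrow> x < y \<Longrightarrow> (x \<in> D \<longleftrightarrow> y \<in> D) \<Longrightarrow> pp x < pp y"
  proof -
    fix x y assume xy: "x \<in> {1..n}" "y \<in> {1..n}" "x < y" "x \<in> D \<longleftrightarrow> y \<in> D"
    show "pp x < pp y"
    proof (cases "x \<in> D")
      case True
      then show ?thesis using xy ppD g_mono by simp
    next
      case False
      then have "x \<in> E" "y \<in> E" using xy DE_un by blast+
      then show ?thesis using xy ppE f_mono by simp
    qed
  qed
  have inr: "a \<in> {1..n}" "b \<in> {1..n}" "c \<in> {1..n}" using abc by auto
  show False
  proof (cases "a \<in> D \<longleftrightarrow> b \<in> D")
    case True then show ?thesis using mono2[OF inr(1,2) abc(2)] abc by simp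
  next
    case False
    show ?thesis
    proof (cases "b \<in> D \<longleftrightarrow> c \<in> D")
      case True then show ?thesis using mono2[OF inr(2,3) abc(3)] abc by simp
    next
      case False
      then have "a \<in> D \<longleftrightarrow> c \<in> D" using \<open>\<not> (a \<in> D \<longleftrightarrow> b \<in> D)\<close> by blast
      then show ?thesis using mono2[OF inr(1,3)] abc by simp
    qed
  qed
qed

end

lemma exists_perm: "valid n S \<Longrightarrow> \<exists>\<pi>\<in>S321 n. defg n \<pi> = S"
proof -
  assume v: "valid n S"
  interpret vsS n S by (rule vsS.intro[OF v])
  show ?thesis using pp_perm pp_av pp_defg unfolding S321_def by blast
qed

lemma card_shift: "card {i. i < Suc m \<and> P i} = (if P 0 then 1 else 0) + card {i. i < m \<and> P (Suc i)}"
proof -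
  have e: "{i. i < Suc m \<and> P i} = (if P 0 then {0} else {}) \<union> Suc ` {i. i < m \<and> P (Suc i)}"
    by (auto simp: less_Suc_eq_0_disj)
  have "card ((if P 0 then {0} else {}) \<union> Suc ` {i. i < m \<and> P (Suc i)}) =
      card (if P 0 then {0::nat} else {}) + card (Suc ` {i. i < m \<and> P (Suc i)})"
    by (rule card_Un_disjoint) auto
  also have "card (Suc ` {i. i < m \<and> P (Suc i)}) = card {i. i < m \<and> P (Suc i)}"
    by (rule card_image) simp
  finally show ?thesis unfolding e by simp
qed

lemma yc_card: "yc xs = card {i. i < length xs \<and> xs ! i \<and> (Suc i = length xs \<or> xs ! Suc i)}"
proof (induction xs rule: yc.induct)
  case 1 then show ?case by simp
next
  case (2 x) then show ?case using card_shift[of 0 "\<lambda>i. [x] ! i \<and> (Suc i = 1 \<or> [x] ! Suc i)"] by simp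
next
  case (3 x y r)
  show ?case
    using card_shift[of "Suc (length r)" "\<lambda>i. (x # y # r) ! i \<and> (Suc i = length (x # y # r) \<or> (x # y # r) ! Suc i)"] 3
    by simp
qed

lemma oc_card: "oc xs = card {i. i < length xs \<and> \<not> xs ! i \<and> (Suc i = length xs \<or> xs ! Suc i)}"
proof (induction xs rule: oc.induct)
  case 1 then show ?case by simp
next
  case (2 x) then show ?case using card_shift[of 0 "\<lambda>i. \<not> [x] ! i \<and> (Suc i = 1 \<or> [x] ! Suc i)"] by simp
next
  case (3 x y r)
  show ?case
    using card_shift[of "Suc (length r)" "\<lambda>i. \<not> (x # y # r) ! i \<and> (Suc i = length (x # y # r) \<or> (x # y # r) ! Suc i)"] 3
    by simp
qed

lemma card_1based: "card {i \<in> {1..n}. Q i} = card {i. i < n \<and> Q (Suc i)}"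
proof -
  have "{i \<in> {1..n}. Q i} = Suc ` {i. i < n \<and> Q (Suc i)}"
  proof
    show "{i \<in> {1..n}. Q i} \<subseteq> Suc ` {i. i < n \<and> Q (Suc i)}"
    proof
      fix i assume "i \<in> {i \<in> {1..n}. Q i}"
      then have "i = Suc (i - 1)" "i - 1 < n" "Q (Suc (i - 1))" by auto
      then show "i \<in> Suc ` {i. i < n \<and> Q (Suc i)}" by blast
    qed
  qed auto
  then show ?thesis by (simp add: card_image)
qed

lemma split_last: "(n::nat) \<ge> 1 \<Longrightarrow> card {i \<in> {1..n}. Q i \<and> (i = n \<or> R i)} = card {i \<in> {1..n-1}. Q i \<and> R i} + (if Q n then 1 else 0)"
proof -
  assume n: "n \<ge> 1"
  have e: "{i \<in> {1..n}. Q i \<and> (i = n \<or> R i)} = {i \<in> {1..n-1}. Q i \<and> R i} \<union> (if Q n then {n} else {})"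
    using n by (intro set_eqI, case_tac "x = n") auto
  have "card ({i \<in> {1..n-1}. Q i \<and> R i} \<union> (if Q n then {n} else {})) = card {i \<in> {1..n-1}. Q i \<and> R i} + card (if Q n then {n} else {})"
    by (rule card_Un_disjoint) auto
  then show ?thesis unfolding e by simp
qed

lemma list_stats:
  assumes "length xs = n" "n \<ge> 1"
  shows "yc xs = card {i \<in> {1..n-1}. xs ! (i-1) \<and> xs ! i} + (if xs ! (n-1) then 1 else 0)"
    and "oc xs = card {i \<in> {1..n}. \<not> xs ! (i-1) \<and> (i = n \<or> xs ! i)}"
proof -
  have "yc xs = card {i \<in> {1..n}. xs ! (i-1) \<and> (i = n \<or> xs ! i)}"
    unfolding yc_card card_1based using assms by simp
  also have "\<dots> = card {i \<in> {1..n-1}. xs ! (i-1) \<and> xs ! i} + (if xs ! (n-1) then 1 else 0)"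
    by (rule split_last[OF assms(2)])
  finally show "yc xs = card {i \<in> {1..n-1}. xs ! (i-1) \<and> xs ! i} + (if xs ! (n-1) then 1 else 0)" .
  show "oc xs = card {i \<in> {1..n}. \<not> xs ! (i-1) \<and> (i = n \<or> xs ! i)}"
    unfolding oc_card card_1based using assms by simp
qed

lemma defg_fst: "i \<in> {1..n} \<Longrightarrow> (\<pi> i < i \<longleftrightarrow> i \<in> fst ` defg n \<pi>)"
  unfolding defg_def by force

theorem mainTheorem12:
  fixes n :: nat
  assumes "n \<ge> 1"
  shows "\<exists>\<phi>. bij_betw \<phi> (plane_trees n) (S321 n) \<and>
    (\<forall>T \<in> plane_trees n.
       young_leaves T =
         card {i \<in> {1..n-1}. deficiency (\<phi> T) i \<and> deficiency (\<phi> T) (i+1)}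
         + (if (\<phi> T) n < n then 1 else 0)
     \<and> old_leaves T =
         card {i \<in> {1..n}. weak_exc (\<phi> T) i \<and> (i = n \<or> \<not> weak_exc (\<phi> T) (i+1))})"
proof -
  define \<phi> where "\<phi> = (\<lambda>T. SOME \<pi>. \<pi> \<in> S321 n \<and> defg n \<pi> = val T)"
  have phi: "\<phi> T \<in> S321 n \<and> defg n (\<phi> T) = val T" if "T \<in> plane_trees n" for T
  proof -
    have "valid n (val T)" using val_valid[of T] that unfolding plane_trees_def by simp
    then have "\<exists>\<pi>. \<pi> \<in> S321 n \<and> defg n \<pi> = val T" using exists_perm by blast
    then show ?thesis unfolding \<phi>_def by (rule someI_ex)
  qed
  have bij: "bij_betw \<phi> (plane_trees n) (S321 n)"
    unfolding bij_betw_def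
  proof
    show "inj_on \<phi> (plane_trees n)"
    proof (rule inj_onI)
      fix T1 T2 assume a: "T1 \<in> plane_trees n" "T2 \<in> plane_trees n" "\<phi> T1 = \<phi> T2"
      then have "val T1 = val T2" using phi[of T1] phi[of T2] by metis
      then show "T1 = T2" using val_inj[of T1 n T2] a unfolding plane_trees_def by simp
    qed
    show "\<phi> ` plane_trees n = S321 n"
    proof
      show "\<phi> ` plane_trees n \<subseteq> S321 n" using phi by blast
      show "S321 n \<subseteq> \<phi> ` plane_trees n"
      proof
        fix \<pi> assume p: "\<pi> \<in> S321 n"
        obtain T where T: "edges T = n" "val T = defg n \<pi>" using val_surj[OF valid_defg[OF p]] by blast
        then have Tp: "T \<in> plane_trees n" unfolding plane_trees_def by simp
        have "\<phi> T = \<pi>" using defg_unique[of "\<phi> T" n \<pi>] phi[OF Tp] p T by simp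
        then show "\<pi> \<in> \<phi> ` plane_trees n" using Tp by blast
      qed
    qed
  qed
  have stats: "young_leaves T =
         card {i \<in> {1..n-1}. deficiency (\<phi> T) i \<and> deficiency (\<phi> T) (i+1)}
         + (if (\<phi> T) n < n then 1 else 0)
     \<and> old_leaves T =
         card {i \<in> {1..n}. weak_exc (\<phi> T) i \<and> (i = n \<or> \<not> weak_exc (\<phi> T) (i+1))}"
    if Tp: "T \<in> plane_trees n" for T
  proof -
    define xs where "xs = fl T"
    have en: "edges T = n" using Tp unfolding plane_trees_def by simp
    have len: "length xs = n" unfolding xs_def using fl_len en by simp
    have key: "deficiency (\<phi> T) i \<longleftrightarrow> xs ! (i - 1)" if i: "i \<in> {1..n}" for i
    proof -
      have "deficiency (\<phi> T) i \<longleftrightarrow> i \<in> fst ` defg n (\<phi> T)"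
        unfolding deficiency_def using defg_fst[OF i] by simp
      also have "\<dots> \<longleftrightarrow> i \<in> fst ` val T" using phi[OF Tp] by simp
      also have "\<dots> \<longleftrightarrow> xs ! (i - 1)" using fl_val[of i T] i en xs_def by auto
      finally show ?thesis .
    qed
    have y1: "{i \<in> {1..n-1}. deficiency (\<phi> T) i \<and> deficiency (\<phi> T) (i+1)} = {i \<in> {1..n-1}. xs ! (i-1) \<and> xs ! i}"
    proof (rule Collect_cong)
      fix i
      show "(i \<in> {1..n-1} \<and> deficiency (\<phi> T) i \<and> deficiency (\<phi> T) (i+1)) = (i \<in> {1..n-1} \<and> xs ! (i-1) \<and> xs ! i)"
        using key[of i] key[of "i+1"] by auto
    qed
    have y2: "((\<phi> T) n < n) \<longleftrightarrow> xs ! (n - 1)"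
      using key[of n] assms unfolding deficiency_def by simp
    have o1: "{i \<in> {1..n}. weak_exc (\<phi> T) i \<and> (i = n \<or> \<not> weak_exc (\<phi> T) (i+1))} = {i \<in> {1..n}. \<not> xs ! (i-1) \<and> (i = n \<or> xs ! i)}"
    proof (rule Collect_cong)
      fix i
      show "(i \<in> {1..n} \<and> weak_exc (\<phi> T) i \<and> (i = n \<or> \<not> weak_exc (\<phi> T) (i+1))) = (i \<in> {1..n} \<and> \<not> xs ! (i-1) \<and> (i = n \<or> xs ! i))"
        using key[of i] key[of "i+1"] unfolding weak_exc_def deficiency_def by (cases "i = n") auto
    qed
    have yl: "young_leaves T = yc xs" and ol: "old_leaves T = oc xs" using young_fl[of T] xs_def by auto
    show ?thesis unfolding yl ol y1 o1 using list_stats[OF len assms] y2 by simp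
  qed
  show ?thesis using bij stats by blast
qed

end
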